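(* Let $(\mathcal{X},\rho)$ be a metric space and $0<\varepsilon<1/32$. Let $x_1,\dots,x_m\in\mathcal{X}$ with labels $y_1,\dots,y_m\in\{-1,1\}$, let $S^+=\{x_i:y_i=1\}$ and $S^-=\{x_i:y_i=-1\}$ be both nonempty, and assume $\rho(S^+,S^-)>0$. Define $$f(x)=\min_{i\in[m]}T\Big(y_i+\frac{2\rho(x,x_i)}{\rho(S^+,S^-)}\Big),$$ where $T(z)=\max\{-1,\min\{1,z\}\}$. Let $\tilde\rho$ be a number with $1\le\tilde\rho/\rho(S^+,S^-)\le1+\varepsilon$. For $x\in\mathcal{X}$, let $a^+,a^-\in[m]$ be any indices with $x_{a^+}\in S^+$, $x_{a^-}\in S^-$, $\rho(x,x_{a^+})\le(1+\varepsilon)\rho(x,S^+)$ and $\rho(x,x_{a^-})\le(1+\varepsilon)\rho(x,S^-)$, and define $$\tilde f(x)=\min_{a\in\{a^+,a^-\}}T\Big(y_a+\frac{2\rho(x,x_a)}{\tilde\rho}\Big).$$ Then $|f(x)-\tilde f(x)|\le2\varepsilon$ for every $x\in\mathcal{X}$ (for any such choice of $a^+,a^-$).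
   Context: $\rho(A,B)=\inf_{a\in A,b\in B}\rho(a,b)$ and $\rho(x,A)=\inf_{a\in A}\rho(x,a)$. *)

theory Defs
  imports "HOL-Analysis.Analysis"
begin

definition clip :: "real \<Rightarrow> real" where
  "clip z = max (-1) (min 1 z)"

definition Splus :: "nat \<Rightarrow> (nat \<Rightarrow> 'a) \<Rightarrow> (nat \<Rightarrow> real) \<Rightarrow> 'a set" where
  "Splus m xs ys = {xs i | i. i < m \<and> ys i = 1}"

definition Sminus :: "nat \<Rightarrow> (nat \<Rightarrow> 'a) \<Rightarrow> (nat \<Rightarrow> real) \<Rightarrow> 'a set" where
  "Sminus m xs ys = {xs i | i. i < m \<and> ys i = -1}"

definition fclass :: "nat \<Rightarrow> (nat \<Rightarrow> 'a::metric_space) \<Rightarrow> (nat \<Rightarrow> real) \<Rightarrow> 'a \<Rightarrow> real" where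
  "fclass m xs ys x =
     Min ((\<lambda>i. clip (ys i + 2 * dist x (xs i) / setdist (Splus m xs ys) (Sminus m xs ys))) ` {0..<m})"

end

theory Submission
  imports Defs
begin

lemma infdist_finite_attained:
  fixes A :: "'a::metric_space set"
  assumes "finite A" "A \<noteq> {}"
  shows "\<exists>a\<in>A. infdist x A = dist x a"
proof -
  have "infdist x A = Inf (dist x ` A)" using assms by (simp add: infdist_def)
  also have "\<dots> = Min (dist x ` A)" using assms by (simp add: cInf_eq_Min)
  finally have eq: "infdist x A = Min (dist x ` A)" .
  moreover have "Min (dist x ` A) \<in> dist x ` A" using assms by (intro Min_in) auto
  ultimately show ?thesis by force
qed

lemma clip_key:
  fixes p q e :: real
  assumes "0 \<le> p" "0 < e" "e < 1" "p / (1+e) \<le> q" "q \<le> (1+e) * p"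
  shows "abs (clip (-1 + 2*p) - clip (-1 + 2*q)) \<le> 2*e"
proof -
  have "p / (1+e) \<ge> p - e*p"
  proof -
    have "(p - e*p) * (1+e) \<le> p" using assms by (simp add: algebra_simps)
    then show ?thesis using assms by (simp add: field_simps)
  qed
  then have w1: "q \<ge> p - e*p" using assms by linarith
  have w2: "q \<le> p + e*p" using assms by (simp add: algebra_simps)
  show ?thesis
  proof (cases "p \<le> 1")
    case True
    then have "e*p \<le> e" using assms by (simp add: mult_left_le)
    then show ?thesis using w1 w2 by (simp add: clip_def)
  next
    case False
    have "(p - 1) * (1 - e) \<ge> 0" using assms False by simp
    then have "p - e*p \<ge> 1 - e" by (simp add: algebra_simps)
    then show ?thesis using w1 w2 False assms unfolding clip_def by (simp add: max_def min_def)
  qed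
qed

theorem mainTheorem6:
  fixes m :: nat and xs :: "nat \<Rightarrow> 'a::metric_space" and ys :: "nat \<Rightarrow> real"
    and \<epsilon> \<rho>t :: real and x :: 'a and ap an :: nat
  assumes eps: "0 < \<epsilon>" "\<epsilon> < 1/32"
    and labels: "\<forall>i<m. ys i = 1 \<or> ys i = -1"
    and nonempty: "Splus m xs ys \<noteq> {}" "Sminus m xs ys \<noteq> {}"
    and sep: "setdist (Splus m xs ys) (Sminus m xs ys) > 0"
    and rhot: "1 \<le> \<rho>t / setdist (Splus m xs ys) (Sminus m xs ys)"
              "\<rho>t / setdist (Splus m xs ys) (Sminus m xs ys) \<le> 1 + \<epsilon>"
    and ap: "ap < m" "ys ap = 1" "dist x (xs ap) \<le> (1 + \<epsilon>) * infdist x (Splus m xs ys)"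
    and an: "an < m" "ys an = -1" "dist x (xs an) \<le> (1 + \<epsilon>) * infdist x (Sminus m xs ys)"
  shows "\<bar>fclass m xs ys x
           - min (clip (ys ap + 2 * dist x (xs ap) / \<rho>t)) (clip (ys an + 2 * dist x (xs an) / \<rho>t))\<bar>
         \<le> 2 * \<epsilon>"
proof -
  define D where "D = setdist (Splus m xs ys) (Sminus m xs ys)"
  define Sm where "Sm = Sminus m xs ys"
  define dm where "dm = infdist x Sm"
  have D0: "D > 0" using sep D_def by simp
  have rD1: "D \<le> \<rho>t" using rhot(1) D0 D_def by (simp add: field_simps)
  have rD2: "\<rho>t \<le> (1+\<epsilon>) * D" using rhot(2) D0 D_def by (simp add: field_simps)
  have fin: "finite Sm" unfolding Sm_def Sminus_def by simp
  obtain a where a: "a \<in> Sm" "dm = dist x a"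
    using infdist_finite_attained[OF fin] nonempty(2) Sm_def dm_def by blast
  then obtain i0 where i0: "i0 < m" "ys i0 = -1" "a = xs i0" unfolding Sm_def Sminus_def by blast
  have anS: "xs an \<in> Sm" unfolding Sm_def Sminus_def using an by blast
  have dm_le: "dm \<le> dist x (xs an)" unfolding dm_def by (rule infdist_le[OF anS])
  have dm0: "0 \<le> dm" unfolding dm_def by (simp add: infdist_nonneg)
  define c where "c = clip (-1 + 2 * (dm / D))"
  have cle1: "c \<le> 1" unfolding c_def clip_def by simp
  have f: "fclass m xs ys x = c"
  proof -
    let ?g = "\<lambda>i. clip (ys i + 2 * dist x (xs i) / setdist (Splus m xs ys) (Sminus m xs ys))"
    have lb: "\<forall>y \<in> ?g ` {0..<m}. c \<le> y"
    proof
      fix y assume "y \<in> ?g ` {0..<m}"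
      then obtain i where i: "i < m" "y = ?g i" by auto
      have nn: "0 \<le> 2 * dist x (xs i) / D" using D0 by simp
      show "c \<le> y"
      proof (cases "ys i = 1")
        case True
        then show ?thesis using i nn cle1 D_def by (simp add: clip_def)
      next
        case False
        then have "ys i = -1" using labels i by auto
        moreover have "xs i \<in> Sm" unfolding Sm_def Sminus_def using i calculation by blast
        then have "dm \<le> dist x (xs i)" unfolding dm_def by (rule infdist_le)
        then have "dm / D \<le> dist x (xs i) / D" using D0 by (simp add: divide_right_mono)
        ultimately show ?thesis using i D_def unfolding c_def clip_def by auto
      qed
    qed
    have "c \<in> ?g ` {0..<m}"
    proof
      show "i0 \<in> {0..<m}" using i0 by simp
      show "c = ?g i0" using i0 a D_def c_def by simp
    qed
    then have "Min (?g ` {0..<m}) = c" using lb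
      by (intro Min_eqI) auto
    then show ?thesis unfolding fclass_def .
  qed
  have r0: "\<rho>t > 0" using rD1 D0 by linarith
  have t1: "clip (ys ap + 2 * dist x (xs ap) / \<rho>t) = 1"
    using ap(2) r0 by (simp add: clip_def)
  have t2: "clip (ys an + 2 * dist x (xs an) / \<rho>t) = clip (-1 + 2 * (dist x (xs an) / \<rho>t))"
    using an(2) by simp
  have c2le: "clip (-1 + 2 * (dist x (xs an) / \<rho>t)) \<le> 1" unfolding clip_def by simp
  have an3: "dist x (xs an) \<le> (1+\<epsilon>) * dm" using an(3) dm_def Sm_def by simp
  have v1: "dm / D / (1+\<epsilon>) \<le> dist x (xs an) / \<rho>t"
  proof -
    have "dm / D / (1+\<epsilon>) = dm / ((1+\<epsilon>) * D)" by simp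
    also have "\<dots> \<le> dist x (xs an) / \<rho>t"
      using dm_le rD2 r0 dm0 by (intro frac_le) auto
    finally show ?thesis .
  qed
  have v2: "dist x (xs an) / \<rho>t \<le> (1+\<epsilon>) * (dm / D)"
  proof -
    have "dist x (xs an) / \<rho>t \<le> ((1+\<epsilon>) * dm) / D"
      using an3 rD1 D0 eps dm0 by (intro frac_le) auto
    then show ?thesis by simp
  qed
  have "\<bar>c - clip (-1 + 2 * (dist x (xs an) / \<rho>t))\<bar> \<le> 2 * \<epsilon>"
    unfolding c_def using clip_key[OF _ eps(1) _ v1 v2] dm0 D0 eps by simp
  then show ?thesis using f t1 t2 c2le by simp
qed

end
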